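(* Let $(X,E,\ell)$ be a weighted tree, with its path metric. Then $X$ is of negative type, its weight $w\colon X\to\mathbb{R}$ (the unique solution of $\sum_{y\in X}e^{-d(x,y)}w(y)=1$ for all $x\in X$) is $$w(x)=\sum_{e\ni x}\frac{1}{1+e^{-\ell(e)}}-(\deg x-1),\qquad x\in X,$$ and its magnitude is $$|X|=\sum_{x\in X}w(x)=1+\sum_{e\in E}\tanh\Big(\frac{\ell(e)}{2}\Big).$$
   Context: A weighted tree is a triple $(X,E,\ell)$ where $(X,E)$ is a finite simple undirected graph that is a tree (connected, no cycles), and $\ell\colon E\to(0,\infty)$ assigns a length to each edge. It is a metric space on the vertex set $X$ with $d(x,y)$ the sum of the lengths of the edges along the unique simple path from $x$ to $y$. $\deg x$ is the number of neighbours of $x$; the sum $\sum_{e\ni x}$ ranges over edges containing $x$. A metric space is of negative type if $(X,\sqrt d)$ embeds isometrically into a Hilbert space. *)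

theory Defs
  imports Complex_Main
begin

definition is_walk :: "'a set set \<Rightarrow> 'a list \<Rightarrow> bool" where
  "is_walk E ps \<longleftrightarrow> ps \<noteq> [] \<and>
     (\<forall>i. Suc i < length ps \<longrightarrow> {ps ! i, ps ! Suc i} \<in> E)"

definition is_path :: "'a set set \<Rightarrow> 'a list \<Rightarrow> 'a \<Rightarrow> 'a \<Rightarrow> bool" where
  "is_path E ps x y \<longleftrightarrow> is_walk E ps \<and> distinct ps \<and> hd ps = x \<and> last ps = y"

definition path_length :: "('a set \<Rightarrow> real) \<Rightarrow> 'a list \<Rightarrow> real" where
  "path_length l ps = (\<Sum>i<length ps - 1. l {ps ! i, ps ! Suc i})"

definition has_cycle :: "'a set set \<Rightarrow> bool" where
  "has_cycle E \<longleftrightarrow> (\<exists>cs. length cs \<ge> 3 \<and> distinct cs \<and> is_walk E cs \<and> {last cs, hd cs} \<in> E)"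

definition weighted_tree :: "'a set \<Rightarrow> 'a set set \<Rightarrow> ('a set \<Rightarrow> real) \<Rightarrow> bool" where
  "weighted_tree X E l \<longleftrightarrow>
     finite X \<and> X \<noteq> {} \<and>
     (\<forall>e\<in>E. \<exists>x y. x \<noteq> y \<and> x \<in> X \<and> y \<in> X \<and> e = {x, y}) \<and>
     (\<forall>e\<in>E. l e > 0) \<and>
     (\<forall>x\<in>X. \<forall>y\<in>X. \<exists>ps. is_path E ps x y) \<and>
     \<not> has_cycle E"

definition tree_dist :: "'a set set \<Rightarrow> ('a set \<Rightarrow> real) \<Rightarrow> 'a \<Rightarrow> 'a \<Rightarrow> real" where
  "tree_dist E l x y = (THE r. \<exists>ps. is_path E ps x y \<and> r = path_length l ps)"

definition degree :: "'a set set \<Rightarrow> 'a \<Rightarrow> nat" where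
  "degree E x = card {e \<in> E. x \<in> e}"

text \<open>Negative type: (X, sqrt d) embeds isometrically into a Hilbert space.
Since X is finite, the image spans a finite-dimensional subspace; we take the
Hilbert space to be the Euclidean space of real functions on X (coordinates
indexed by X with the standard l2 norm).\<close>
definition negative_type :: "'a set \<Rightarrow> ('a \<Rightarrow> 'a \<Rightarrow> real) \<Rightarrow> bool" where
  "negative_type X d \<longleftrightarrow>
     (\<exists>\<phi> :: 'a \<Rightarrow> 'a \<Rightarrow> real. \<forall>x\<in>X. \<forall>y\<in>X.
        sqrt (d x y) = sqrt (\<Sum>z\<in>X. (\<phi> x z - \<phi> y z)\<^sup>2))"

definition is_weighting :: "'a set \<Rightarrow> ('a \<Rightarrow> 'a \<Rightarrow> real) \<Rightarrow> ('a \<Rightarrow> real) \<Rightarrow> bool" where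
  "is_weighting X d w \<longleftrightarrow> (\<forall>x\<in>X. (\<Sum>y\<in>X. exp (- d x y) * w y) = 1)"

end

theory Submission
  imports Defs
begin


lemma walk_single[simp]: "is_walk E [x]"
  by (simp add: is_walk_def)

lemma walk_Nil[simp]: "\<not> is_walk E []"
  by (simp add: is_walk_def)

lemma walk_Cons2: "is_walk E (x # y # ys) \<longleftrightarrow> {x,y} \<in> E \<and> is_walk E (y # ys)"
proof
  assume h: "is_walk E (x # y # ys)"
  have "Suc 0 < length (x # y # ys)" by simp
  then have "{(x # y # ys) ! 0, (x # y # ys) ! Suc 0} \<in> E" using h unfolding is_walk_def by blast
  then have "{x,y} \<in> E" by simp
  moreover have "is_walk E (y # ys)" unfolding is_walk_def
  proof (intro conjI allI impI)
    fix i assume "Suc i < length (y # ys)"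
    then have "Suc (Suc i) < length (x # y # ys)" by simp
    then have "{(x#y#ys) ! Suc i, (x#y#ys) ! Suc (Suc i)} \<in> E" using h unfolding is_walk_def by blast
    then show "{(y # ys) ! i, (y # ys) ! Suc i} \<in> E" by simp
  qed simp
  ultimately show "{x,y} \<in> E \<and> is_walk E (y # ys)" by simp
next
  assume h: "{x,y} \<in> E \<and> is_walk E (y # ys)"
  show "is_walk E (x # y # ys)" unfolding is_walk_def
  proof (intro conjI allI impI)
    fix i assume i: "Suc i < length (x # y # ys)"
    show "{(x # y # ys) ! i, (x # y # ys) ! Suc i} \<in> E"
    proof (cases i)
      case 0 then show ?thesis using h by simp
    next
      case (Suc j)
      then have "Suc j < length (y # ys)" using i by simp
      then have "{(y#ys) ! j, (y#ys) ! Suc j} \<in> E" using h unfolding is_walk_def by blast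
      then show ?thesis using Suc by simp
    qed
  qed simp
qed

lemma plen_single[simp]: "path_length l [x] = 0"
  by (simp add: path_length_def)

lemma plen_Cons2: "path_length l (x # y # ys) = l {x,y} + path_length l (y # ys)"
proof -
  have "path_length l (x # y # ys) = (\<Sum>i<Suc (length ys). l {(x#y#ys) ! i, (x#y#ys) ! Suc i})"
    by (simp add: path_length_def)
  also have "\<dots> = l {x,y} + (\<Sum>i<length ys. l {(x#y#ys) ! Suc i, (x#y#ys) ! Suc (Suc i)})"
    by (subst sum.lessThan_Suc_shift) simp
  also have "\<dots> = l {x,y} + path_length l (y # ys)"
    by (simp add: path_length_def)
  finally show ?thesis .
qed

lemma walk_rev: "is_walk E ps \<Longrightarrow> is_walk E (rev ps)"
proof -
  assume h: "is_walk E ps"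
  show ?thesis unfolding is_walk_def
  proof (intro conjI allI impI)
    show "rev ps \<noteq> []" using h by (auto simp: is_walk_def)
    fix i assume i: "Suc i < length (rev ps)"
    define j where "j = length ps - Suc (Suc i)"
    have j: "Suc j < length ps" "rev ps ! i = ps ! Suc j" "rev ps ! Suc i = ps ! j"
      using i by (auto simp: j_def rev_nth Suc_diff_Suc)
    have "{ps ! j, ps ! Suc j} \<in> E" using h j(1) unfolding is_walk_def by blast
    then show "{rev ps ! i, rev ps ! Suc i} \<in> E" using j by (simp add: insert_commute)
  qed
qed

lemma plen_rev: "path_length l (rev ps) = path_length l ps"
proof -
  define m where "m = length ps - 1"
  define f where "f j = l {ps ! j, ps ! Suc j}" for j
  have "path_length l (rev ps) = (\<Sum>i<m. l {rev ps ! i, rev ps ! Suc i})"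
    by (simp add: path_length_def m_def)
  also have "\<dots> = (\<Sum>i<m. f (m - Suc i))"
  proof (rule sum.cong)
    fix i assume "i \<in> {..<m}"
    then have i: "i < m" by simp
    have "rev ps ! i = ps ! Suc (m - Suc i)" "rev ps ! Suc i = ps ! (m - Suc i)"
      using i by (auto simp: m_def rev_nth Suc_diff_Suc)
    then show "l {rev ps ! i, rev ps ! Suc i} = f (m - Suc i)" by (simp add: f_def insert_commute)
  qed simp
  also have "\<dots> = sum f {..<m}" by (rule sum.nat_diff_reindex)
  also have "\<dots> = path_length l ps" by (simp add: path_length_def m_def f_def)
  finally show ?thesis .
qed

lemma path_rev: "is_path E ps x y \<Longrightarrow> is_path E (rev ps) y x"
  unfolding is_path_def
  by (auto simp: walk_rev hd_rev last_rev)

lemma path_same: "is_path E ps x x \<Longrightarrow> ps = [x]"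
proof -
  assume h: "is_path E ps x x"
  then have ne: "ps \<noteq> []" and d: "distinct ps" and hl: "hd ps = x" "last ps = x"
    by (auto simp: is_path_def is_walk_def)
  show ?thesis
  proof (cases "length ps \<ge> 2")
    case True
    have "ps ! 0 = x" using hl ne by (simp add: hd_conv_nth)
    moreover have "ps ! (length ps - 1) = x" using hl ne by (simp add: last_conv_nth)
    ultimately have "ps ! 0 = ps ! (length ps - 1)" by simp
    moreover have i: "0 < length ps" "length ps - 1 < length ps" using True by auto
    ultimately have "(0::nat) = length ps - 1" using nth_eq_iff_index_eq[OF d i] by simp
    then show ?thesis using True by simp
  next
    case False
    have "0 < length ps" using ne by simp
    then have "length ps = 1" using False by linarith
    then show ?thesis using hl by (cases ps) auto
  qed
qed



lemma walk_in_X: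
  assumes E: "\<forall>e\<in>E. \<exists>x y. x \<noteq> y \<and> x \<in> X \<and> y \<in> X \<and> e = {x, y}"
    and w: "is_walk E ps" and len: "2 \<le> length ps"
  shows "set ps \<subseteq> X"
proof
  fix z assume "z \<in> set ps"
  then obtain i where i: "i < length ps" "ps ! i = z" by (auto simp: in_set_conv_nth)
  obtain e where e: "e \<in> E" "z \<in> e"
  proof (cases "Suc i < length ps")
    case True
    then have "{ps ! i, ps ! Suc i} \<in> E" using w unfolding is_walk_def by blast
    then show ?thesis using that i by auto
  next
    case False
    then have "Suc (i - 1) < length ps" "Suc (i - 1) = i" using i len by auto
    then have "{ps ! (i - 1), ps ! i} \<in> E" using w unfolding is_walk_def by metis
    then show ?thesis using that i by auto
  qed
  moreover from this(1) obtain u v where "u \<in> X" "v \<in> X" "e = {u, v}" using E by metis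
  ultimately show "z \<in> X" by auto
qed

lemma path_in_X:
  assumes "weighted_tree X E l" "is_path E ps x y" "x \<in> X"
  shows "set ps \<subseteq> X"
proof (cases "2 \<le> length ps")
  case True
  then show ?thesis using assms walk_in_X[of E X ps] unfolding weighted_tree_def is_path_def by blast
next
  case False
  have "ps \<noteq> []" using assms(2) by (auto simp: is_path_def is_walk_def)
  then have "0 < length ps" by simp
  then have "length ps = 1" using False by linarith
  then obtain u where "ps = [u]" by (cases ps) auto
  then show ?thesis using assms(2,3) by (auto simp: is_path_def)
qed

lemma walk_mono: "is_walk E ps \<Longrightarrow> E \<subseteq> E2 \<Longrightarrow> is_walk E2 ps"
  unfolding is_walk_def by blast

lemma walk_avoid:
  assumes "is_walk E ps" "a \<notin> set ps"
  shows "is_walk (E - {{a,b}}) ps"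
  unfolding is_walk_def
proof (intro conjI allI impI)
  show "ps \<noteq> []" using assms by (auto simp: is_walk_def)
  fix i assume i: "Suc i < length ps"
  then have "{ps ! i, ps ! Suc i} \<in> E" using assms unfolding is_walk_def by blast
  moreover have "ps ! i \<noteq> a" "ps ! Suc i \<noteq> a" using i assms(2) nth_mem
    by (metis Suc_lessD, metis)
  ultimately show "{ps ! i, ps ! Suc i} \<in> E - {{a, b}}" by (auto simp: doubleton_eq_iff)
qed

lemma pair_eq_leaf: "{u, a} = {a, b} \<Longrightarrow> u \<noteq> a \<Longrightarrow> u = b"
  by (auto simp: doubleton_eq_iff)

lemma leaf_avoid:
  assumes leaf: "{e\<in>E. a\<in>e} = {{a,b}}" and p: "is_path E ps x y" and "x \<noteq> a" "y \<noteq> a"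
  shows "a \<notin> set ps"
proof
  assume "a \<in> set ps"
  then obtain i where i: "i < length ps" "ps ! i = a" by (auto simp: in_set_conv_nth)
  have ne: "ps \<noteq> []" and d: "distinct ps" and w: "is_walk E ps"
    using p by (auto simp: is_path_def is_walk_def)
  have "ps ! 0 = x" using p ne by (simp add: is_path_def hd_conv_nth)
  then have "i \<noteq> 0" using i assms(3) by (cases "i = 0") auto
  then obtain k where k: "i = Suc k" by (cases i) auto
  have "ps ! (length ps - 1) = y" using p ne by (simp add: is_path_def last_conv_nth)
  then have "i \<noteq> length ps - 1" using i assms(4) by auto
  then have ii: "Suc (Suc k) < length ps" using i k by auto
  have "Suc k < length ps" using ii by simp
  then have "{ps ! k, ps ! Suc k} \<in> E" using w unfolding is_walk_def by blast
  then have e1: "{ps ! k, a} \<in> E" using i k by simp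
  have "{ps ! Suc k, ps ! Suc (Suc k)} \<in> E" using w ii unfolding is_walk_def by blast
  then have e2: "{a, ps ! Suc (Suc k)} \<in> E" using i k by simp
  have "{ps ! k, a} \<in> {e\<in>E. a\<in>e}" using e1 by simp
  then have "{ps ! k, a} = {a,b}" unfolding leaf by simp
  moreover have "ps ! k \<noteq> a" using nth_eq_iff_index_eq[OF d, of k "Suc k"] i k ii by simp
  ultimately have b1: "ps ! k = b" by (rule pair_eq_leaf)
  have "{ps ! Suc (Suc k), a} \<in> {e\<in>E. a\<in>e}" using e2 by (simp add: insert_commute)
  then have "{ps ! Suc (Suc k), a} = {a,b}" unfolding leaf by simp
  moreover have "ps ! Suc (Suc k) \<noteq> a" using nth_eq_iff_index_eq[OF d, of "Suc (Suc k)" "Suc k"] i k ii by simp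
  ultimately have b2: "ps ! Suc (Suc k) = b" by (rule pair_eq_leaf)
  have "k = Suc (Suc k)" using b1 b2 d ii nth_eq_iff_index_eq[OF d, of k "Suc (Suc k)"] by simp
  then show False by simp
qed

lemma leaf_start:
  assumes leaf: "{e\<in>E. a\<in>e} = {{a,b}}" and p: "is_path E ps a y" and "y \<noteq> a"
  shows "\<exists>ps'. ps = a # ps' \<and> is_path (E - {{a,b}}) ps' b y"
proof -
  have ne: "ps \<noteq> []" and d: "distinct ps" and w: "is_walk E ps"
    using p by (auto simp: is_path_def is_walk_def)
  obtain ps' where ps: "ps = a # ps'" using ne p by (cases ps) (auto simp: is_path_def)
  have "ps' \<noteq> []" using ps p assms(3) by (auto simp: is_path_def)
  then obtain c rest where ps': "ps' = c # rest" by (cases ps') auto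
  have e: "{a, c} \<in> E" and w': "is_walk E ps'" using w unfolding ps ps' walk_Cons2 by auto
  have "{c, a} \<in> {e\<in>E. a\<in>e}" using e by (simp add: insert_commute)
  then have "{c, a} = {a, b}" unfolding leaf by simp
  moreover have "c \<noteq> a" using d ps ps' by auto
  ultimately have c: "c = b" using pair_eq_leaf by metis
  have "a \<notin> set ps'" using d ps by auto
  then have "is_walk (E - {{a,b}}) ps'" using w' walk_avoid by metis
  moreover have "last ps' = y" using p ps \<open>ps' \<noteq> []\<close> by (auto simp: is_path_def)
  ultimately have "is_path (E - {{a,b}}) ps' b y" using d ps ps' c by (auto simp: is_path_def)
  then show ?thesis using ps by blast
qed

lemma leaf_cons:
  assumes "{a,b} \<in> E" "is_path E' ps' b y" "E' \<subseteq> E" "a \<notin> set ps'"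
  shows "is_path E (a # ps') a y"
proof -
  obtain rest where ps': "ps' = b # rest" using assms(2)
    by (cases ps') (auto simp: is_path_def)
  have "is_walk E ps'" using assms(2,3) walk_mono by (auto simp: is_path_def)
  then have "is_walk E (a # ps')" using assms(1) ps' walk_Cons2 by metis
  then show ?thesis using assms(2,4) ps' by (auto simp: is_path_def)
qed

lemma leaf_remove:
  assumes t: "weighted_tree X E l" and a: "a \<in> X" "a \<noteq> b" and leaf: "{e\<in>E. a\<in>e} = {{a,b}}"
  shows "weighted_tree (X - {a}) (E - {{a,b}}) l"
proof -
  have fin: "finite X" and E: "\<forall>e\<in>E. \<exists>x y. x \<noteq> y \<and> x \<in> X \<and> y \<in> X \<and> e = {x, y}"
    and pos: "\<forall>e\<in>E. l e > 0" and con: "\<forall>x\<in>X. \<forall>y\<in>X. \<exists>ps. is_path E ps x y"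
    and nc: "\<not> has_cycle E" using t unfolding weighted_tree_def by auto
  have "{a,b} \<in> {e\<in>E. a\<in>e}" unfolding leaf by simp
  then have ab: "{a,b} \<in> E" by simp
  then have "b \<in> X" using E by (auto simp: doubleton_eq_iff)
  then have ne: "X - {a} \<noteq> {}" using a by blast
  have E': "\<forall>e\<in>E - {{a,b}}. \<exists>x y. x \<noteq> y \<and> x \<in> X - {a} \<and> y \<in> X - {a} \<and> e = {x, y}"
  proof
    fix e assume e: "e \<in> E - {{a,b}}"
    have "a \<notin> e"
    proof
      assume "a \<in> e"
      then have "e \<in> {e\<in>E. a\<in>e}" using e by simp
      then show False using e unfolding leaf by simp
    qed
    then show "\<exists>x y. x \<noteq> y \<and> x \<in> X - {a} \<and> y \<in> X - {a} \<and> e = {x, y}" using E e by blast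
  qed
  have con': "\<forall>x\<in>X - {a}. \<forall>y\<in>X - {a}. \<exists>ps. is_path (E - {{a,b}}) ps x y"
  proof (intro ballI)
    fix x y assume xy: "x \<in> X - {a}" "y \<in> X - {a}"
    then obtain ps where ps: "is_path E ps x y" using con by blast
    then have "a \<notin> set ps" using leaf_avoid[OF leaf ps] xy by blast
    then have "is_path (E - {{a,b}}) ps x y" using ps walk_avoid by (auto simp: is_path_def)
    then show "\<exists>ps. is_path (E - {{a,b}}) ps x y" by blast
  qed
  have nc': "\<not> has_cycle (E - {{a,b}})"
    using nc walk_mono unfolding has_cycle_def by blast
  have "finite (X - {a})" using fin by simp
  moreover have "\<forall>e\<in>E - {{a,b}}. l e > 0" using pos by simp
  ultimately show ?thesis unfolding weighted_tree_def using ne E' con' nc' by blast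
qed



lemma edge_X:
  assumes "weighted_tree X E l" "e \<in> E"
  obtains u v where "u \<noteq> v" "u \<in> X" "v \<in> X" "e = {u, v}"
proof -
  have "\<forall>e\<in>E. \<exists>x y. x \<noteq> y \<and> x \<in> X \<and> y \<in> X \<and> e = {x, y}"
    using assms(1) unfolding weighted_tree_def by blast
  then show ?thesis using assms(2) that by metis
qed

lemma leaf_exists:
  assumes t: "weighted_tree X E l" and c2: "2 \<le> card X"
  shows "\<exists>a b. a \<in> X \<and> a \<noteq> b \<and> {e\<in>E. a\<in>e} = {{a,b}}"
proof -
  have fin: "finite X" and E: "\<forall>e\<in>E. \<exists>x y. x \<noteq> y \<and> x \<in> X \<and> y \<in> X \<and> e = {x, y}"
    and con: "\<forall>x\<in>X. \<forall>y\<in>X. \<exists>ps. is_path E ps x y"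
    and nc: "\<not> has_cycle E" using t unfolding weighted_tree_def by auto
  define W where "W = {ps. is_walk E ps \<and> distinct ps \<and> 2 \<le> length ps}"
  have bound: "length ps \<le> card X" if "ps \<in> W" for ps
  proof -
    have "set ps \<subseteq> X" using that walk_in_X[OF E] unfolding W_def by blast
    then have "card (set ps) \<le> card X" by (rule card_mono[OF fin])
    then show ?thesis using that distinct_card unfolding W_def by fastforce
  qed
  obtain x y where xy: "x \<in> X" "y \<in> X" "x \<noteq> y"
  proof -
    have "\<not> (\<exists>x. X \<subseteq> {x})" using c2 fin
      by (metis card.empty card_insert_disjoint finite.emptyI empty_iff insert_absorb
          card_mono[of "{_}" X] not_numeral_le_zero subset_singletonD Suc_n_not_le_n
          One_nat_def card.insert numeral_2_eq_2 finite.insertI)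
    then show ?thesis using that by blast
  qed
  obtain ps0 where ps0: "is_path E ps0 x y" using con xy by blast
  have "ps0 \<in> W"
  proof -
    have "ps0 \<noteq> []" using ps0 by (auto simp: is_path_def is_walk_def)
    moreover have "\<not> length ps0 = 1"
    proof
      assume "length ps0 = 1"
      then obtain u where "ps0 = [u]" by (cases ps0) auto
      then show False using ps0 xy by (auto simp: is_path_def)
    qed
    ultimately have "2 \<le> length ps0" by (cases ps0) (auto simp: Suc_le_eq)
    then show ?thesis using ps0 unfolding W_def is_path_def by auto
  qed
  define n where "n = Max (length ` W)"
  have finL: "finite (length ` W)"
    by (rule finite_subset[of _ "{..card X}"]) (auto dest: bound)
  have "n \<in> length ` W" unfolding n_def using finL \<open>ps0 \<in> W\<close> by (intro Max_in) auto
  then obtain ps where psW: "ps \<in> W" and psn: "length ps = n" by auto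
  have maxn: "length qs \<le> n" if "qs \<in> W" for qs
    unfolding n_def using finL that by (intro Max_ge) auto
  have w: "is_walk E ps" and d: "distinct ps" and l2: "2 \<le> length ps" using psW unfolding W_def by auto
  obtain a b rest where ps: "ps = a # b # rest" using l2
    by (cases ps; cases "tl ps") auto
  have ab: "{a,b} \<in> E" using w ps walk_Cons2 by metis
  have "a \<noteq> b" using d ps by auto
  have "a \<in> X" using ab E by (metis doubleton_eq_iff)
  have "{e\<in>E. a\<in>e} \<subseteq> {{a,b}}"
  proof
    fix e assume e: "e \<in> {e\<in>E. a\<in>e}"
    then obtain u v where uv: "u \<noteq> v" "e = {u,v}" using E by blast
    obtain c where ce: "e = {a, c}" and "c \<noteq> a" using uv e by auto
    show "e \<in> {{a,b}}"
    proof (cases "c \<in> set ps")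
      case False
      have "{c, a} \<in> E" using e ce by (simp add: insert_commute)
      then have "is_walk E (c # a # b # rest)" using w ps walk_Cons2 by metis
      moreover have "distinct (c # a # b # rest)" using d ps False by auto
      ultimately have "c # ps \<in> W" unfolding W_def ps by auto
      then have "length (c # ps) \<le> n" by (rule maxn)
      then show ?thesis using psn by simp
    next
      case True
      then obtain j where j: "j < length ps" "ps ! j = c" by (auto simp: in_set_conv_nth)
      have "j \<noteq> 0" using j \<open>c \<noteq> a\<close> ps by (cases "j = 0") auto
      show ?thesis
      proof (cases "j = 1")
        case True
        then show ?thesis using j ps ce by simp
      next
        case False
        define cs where "cs = take (Suc j) ps"
        have lcs: "length cs = Suc j" using j by (simp add: cs_def)
        have "3 \<le> length cs" using lcs \<open>j \<noteq> 0\<close> False by simp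
        moreover have "distinct cs" using d by (simp add: cs_def)
        moreover have "is_walk E cs" unfolding is_walk_def
        proof (intro conjI allI impI)
          show "cs \<noteq> []" using lcs by auto
          fix i assume i: "Suc i < length cs"
          then have "Suc i < length ps" using lcs j by simp
          then have "{ps ! i, ps ! Suc i} \<in> E" using w unfolding is_walk_def by blast
          then show "{cs ! i, cs ! Suc i} \<in> E" using i lcs by (simp add: cs_def)
        qed
        moreover have "last cs = c"
        proof -
          have "cs ! j = c" using j by (simp add: cs_def)
          moreover have "cs \<noteq> []" using lcs by auto
          ultimately show ?thesis using lcs by (simp add: last_conv_nth)
        qed
        moreover have "hd cs = a" using ps by (simp add: cs_def)
        moreover have "{c, a} \<in> E" using e ce by (simp add: insert_commute)
        ultimately have "has_cycle E" unfolding has_cycle_def by metis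
        then show ?thesis using nc by simp
      qed
    qed
  qed
  moreover have "{{a,b}} \<subseteq> {e\<in>E. a\<in>e}" using ab by simp
  ultimately show ?thesis using \<open>a \<in> X\<close> \<open>a \<noteq> b\<close> by blast
qed

lemma tree_induct:
  assumes t: "weighted_tree X E l"
    and base: "\<And>x. P {x} {}"
    and step: "\<And>X E a b. weighted_tree X E l \<Longrightarrow> a \<in> X \<Longrightarrow> b \<in> X \<Longrightarrow> a \<noteq> b \<Longrightarrow> {a,b} \<in> E
       \<Longrightarrow> {e\<in>E. a\<in>e} = {{a,b}} \<Longrightarrow> weighted_tree (X - {a}) (E - {{a,b}}) l
       \<Longrightarrow> P (X - {a}) (E - {{a,b}}) \<Longrightarrow> P X E"
  shows "P X E"
proof -
  have "\<forall>X E. card X = n \<longrightarrow> weighted_tree X E l \<longrightarrow> P X E" for n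
  proof (induction n rule: less_induct)
    case (less n)
    show ?case
    proof (intro allI impI)
      fix X E assume cn: "card X = n" and t: "weighted_tree X E l"
      have fin: "finite X" and ne: "X \<noteq> {}" using t unfolding weighted_tree_def by auto
      show "P X E"
      proof (cases "2 \<le> card X")
        case False
        have "card X \<noteq> 0" using fin ne by simp
        then have "card X = 1" using False by linarith
        then obtain x where X: "X = {x}" by (rule card_1_singletonE)
        have "E = {}"
        proof (rule ccontr)
          assume "E \<noteq> {}"
          then obtain e where "e \<in> E" by blast
          then obtain u v where "u \<noteq> v" "u \<in> X" "v \<in> X" by (rule edge_X[OF t])
          then show False using X by simp
        qed
        then show ?thesis using X base by simp
      next
        case True
        obtain a b where ab: "a \<in> X" "a \<noteq> b" "{e\<in>E. a\<in>e} = {{a,b}}"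
          using leaf_exists[OF t True] by blast
        have "{a,b} \<in> {e\<in>E. a\<in>e}" unfolding ab(3) by simp
        then have abE: "{a,b} \<in> E" by simp
        then obtain u v where "u \<in> X" "v \<in> X" "{a,b} = {u, v}" by (rule edge_X[OF t])
        then have bX: "b \<in> X" by (auto simp: doubleton_eq_iff)
        have t': "weighted_tree (X - {a}) (E - {{a,b}}) l" using leaf_remove[OF t ab] .
        have "card (X - {a}) < n" using cn fin ab(1) by (simp add: card_Diff_singleton) (use True in linarith)
        then have "P (X - {a}) (E - {{a,b}})" using less t' by blast
        then show ?thesis using step[OF t ab(1) bX ab(2) abE ab(3) t'] by blast
      qed
    qed
  qed
  then show ?thesis using t by blast
qed



definition U :: "'a set set \<Rightarrow> ('a set \<Rightarrow> real) \<Rightarrow> bool" where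
  "U E l \<longleftrightarrow> (\<forall>x y ps qs. is_path E ps x y \<longrightarrow> is_path E qs x y \<longrightarrow> path_length l ps = path_length l qs)"

lemma plen_cons_path:
  assumes "is_path E ps b y"
  shows "path_length l (a # ps) = l {a, b} + path_length l ps"
proof -
  obtain rest where "ps = b # rest" using assms by (cases ps) (auto simp: is_path_def is_walk_def)
  then show ?thesis by (simp add: plen_Cons2)
qed

lemma path_empty: "is_path {} ps x y \<Longrightarrow> ps = [x]"
proof -
  assume h: "is_path {} ps x y"
  then have ne: "ps \<noteq> []" by (auto simp: is_path_def is_walk_def)
  have "\<not> Suc 0 < length ps"
  proof
    assume "Suc 0 < length ps"
    then have "{ps ! 0, ps ! Suc 0} \<in> ({} :: 'a set set)" using h unfolding is_path_def is_walk_def by blast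
    then show False by simp
  qed
  then have "length ps = 1" using ne by (cases ps) auto
  then show ?thesis using h by (cases ps) (auto simp: is_path_def)
qed

lemma U_tree:
  assumes "weighted_tree X E l"
  shows "U E l"
proof (rule tree_induct[OF assms, where P="\<lambda>X E. U E l"], goal_cases)
  case (1 x)
  show ?case unfolding U_def
  proof (intro allI impI)
    fix u v and ps qs :: "'a list" assume "is_path {} ps u v" "is_path {} qs u v"
    then have "ps = [u]" "qs = [u]" using path_empty by metis+
    then show "path_length l ps = path_length l qs" by simp
  qed
next
  case (2 X E a b)
  define E' where "E' = E - {{a,b}}"
  have U': "U E' l" using 2 unfolding E'_def by blast
  have leaf: "{e\<in>E. a\<in>e} = {{a,b}}" using 2 by blast
  have froma: "path_length l ps = path_length l qs"
    if p: "is_path E ps a y" and q: "is_path E qs a y" for ps qs y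
  proof (cases "y = a")
    case True
    then show ?thesis using p q path_same by metis
  next
    case False
    obtain ps' where ps': "ps = a # ps'" "is_path E' ps' b y" using leaf_start[OF leaf p False] E'_def by blast
    obtain qs' where qs': "qs = a # qs'" "is_path E' qs' b y" using leaf_start[OF leaf q False] E'_def by blast
    have "path_length l ps' = path_length l qs'" using U' ps' qs' unfolding U_def by blast
    then show ?thesis using ps' qs' plen_cons_path by metis
  qed
  show ?case unfolding U_def
  proof (intro allI impI)
    fix x y ps qs assume p: "is_path E ps x y" and q: "is_path E qs x y"
    show "path_length l ps = path_length l qs"
    proof (cases "x = a")
      case True then show ?thesis using froma p q by blast
    next
      case xa: False
      show ?thesis
      proof (cases "y = a")
        case True
        have "path_length l (rev ps) = path_length l (rev qs)"
          using froma path_rev[OF p] path_rev[OF q] True by blast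
        then show ?thesis by (simp add: plen_rev)
      next
        case False
        have "a \<notin> set ps" "a \<notin> set qs" using leaf_avoid[OF leaf p xa False] leaf_avoid[OF leaf q xa False] by auto
        then have "is_walk E' ps" "is_walk E' qs"
          using p q walk_avoid unfolding E'_def is_path_def by metis+
        then have "is_path E' ps x y" "is_path E' qs x y"
          using p q unfolding is_path_def by auto
        then show ?thesis using U' unfolding U_def by blast
      qed
    qed
  qed
qed

lemma tree_dist_eq:
  assumes "U E l" "is_path E ps x y"
  shows "tree_dist E l x y = path_length l ps"
  unfolding tree_dist_def
proof (rule the_equality)
  show "\<exists>qs. is_path E qs x y \<and> path_length l ps = path_length l qs" using assms(2) by blast
  fix r assume "\<exists>qs. is_path E qs x y \<and> r = path_length l qs"
  then show "r = path_length l ps" using assms unfolding U_def by metis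
qed

lemma tree_dist_self: "tree_dist E l x x = 0"
proof -
  have "is_path E [x] x x" by (simp add: is_path_def)
  then have "U E l \<Longrightarrow> ?thesis" using tree_dist_eq by fastforce
  show ?thesis unfolding tree_dist_def
  proof (rule the_equality)
    show "\<exists>ps. is_path E ps x x \<and> 0 = path_length l ps" using \<open>is_path E [x] x x\<close> by force
    fix r assume "\<exists>ps. is_path E ps x x \<and> r = path_length l ps"
    then show "r = 0" using path_same by fastforce
  qed
qed

lemma tree_conn:
  assumes "weighted_tree X E l" "x \<in> X" "y \<in> X"
  obtains ps where "is_path E ps x y"
proof -
  have "\<forall>x\<in>X. \<forall>y\<in>X. \<exists>ps. is_path E ps x y" using assms(1) unfolding weighted_tree_def by blast
  then show ?thesis using assms(2,3) that by blast
qed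

lemma tree_dist_sym:
  assumes t: "weighted_tree X E l" and "x \<in> X" "y \<in> X"
  shows "tree_dist E l x y = tree_dist E l y x"
proof -
  obtain ps where p: "is_path E ps x y" using tree_conn[OF t assms(2,3)] by blast
  have u: "U E l" using U_tree[OF t] .
  show ?thesis using tree_dist_eq[OF u p] tree_dist_eq[OF u path_rev[OF p]] plen_rev by metis
qed

lemma dist_leaf:
  assumes t: "weighted_tree X E l" and a: "a \<in> X" "a \<noteq> b" "{a,b} \<in> E"
    and leaf: "{e\<in>E. a\<in>e} = {{a,b}}" and t': "weighted_tree (X - {a}) (E - {{a,b}}) l"
    and bX: "b \<in> X"
  shows "\<And>x y. x \<in> X - {a} \<Longrightarrow> y \<in> X - {a} \<Longrightarrow> tree_dist E l x y = tree_dist (E - {{a,b}}) l x y"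
    and "\<And>y. y \<in> X - {a} \<Longrightarrow> tree_dist E l a y = l {a,b} + tree_dist (E - {{a,b}}) l b y"
    and "\<And>y. y \<in> X - {a} \<Longrightarrow> tree_dist E l y a = l {a,b} + tree_dist (E - {{a,b}}) l b y"
proof -
  have u: "U E l" using U_tree[OF t] .
  have u': "U (E - {{a,b}}) l" using U_tree[OF t'] .
  show 1: "tree_dist E l x y = tree_dist (E - {{a,b}}) l x y" if xy: "x \<in> X - {a}" "y \<in> X - {a}" for x y
  proof -
    obtain ps where p: "is_path (E - {{a,b}}) ps x y" using tree_conn[OF t' xy] by blast
    then have "is_path E ps x y" using walk_mono unfolding is_path_def by blast
    then show ?thesis using tree_dist_eq[OF u] tree_dist_eq[OF u' p] by metis
  qed
  show 2: "tree_dist E l a y = l {a,b} + tree_dist (E - {{a,b}}) l b y" if yX: "y \<in> X - {a}" for y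
  proof -
    have b': "b \<in> X - {a}" using a bX by blast
    obtain ps where p: "is_path (E - {{a,b}}) ps b y" using tree_conn[OF t' b' yX] by blast
    have "set ps \<subseteq> X - {a}" using path_in_X[OF t' p b'] .
    then have "a \<notin> set ps" by blast
    then have "is_path E (a # ps) a y" using leaf_cons[OF a(3) p] by blast
    then show ?thesis using tree_dist_eq[OF u] tree_dist_eq[OF u' p] plen_cons_path[OF p] by metis
  qed
  show "tree_dist E l y a = l {a,b} + tree_dist (E - {{a,b}}) l b y" if "y \<in> X - {a}" for y
    using 2[OF that] tree_dist_sym[OF t, of y a] that a by simp
qed



definition wt :: "'a set set \<Rightarrow> ('a set \<Rightarrow> real) \<Rightarrow> 'a \<Rightarrow> real" where
  "wt E l x = (\<Sum>e\<in>{e \<in> E. x \<in> e}. 1 / (1 + exp (- l e))) - (real (degree E x) - 1)"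

lemma tree_finE: "weighted_tree X E l \<Longrightarrow> finite E"
proof -
  assume t: "weighted_tree X E l"
  have "E \<subseteq> Pow X"
  proof
    fix e assume "e \<in> E"
    then obtain u v where "u \<in> X" "v \<in> X" "e = {u, v}" by (rule edge_X[OF t])
    then show "e \<in> Pow X" by auto
  qed
  moreover have "finite X" using t unfolding weighted_tree_def by blast
  ultimately show ?thesis by (meson finite_Pow_iff finite_subset)
qed

lemma wt_a:
  assumes leaf: "{e\<in>E. a\<in>e} = {{a,b}}"
  shows "wt E l a = 1 / (1 + exp (- l {a,b}))"
  unfolding wt_def degree_def leaf by simp

lemma wt_other:
  assumes fin: "finite E" and "a \<noteq> b" "{a,b} \<in> E" "y \<noteq> a"
  shows "wt E l y = wt (E - {{a,b}}) l y + (if y = b then 1 / (1 + exp (- l {a,b})) - 1 else 0)"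
proof (cases "y = b")
  case True
  have S: "{e\<in>E. y\<in>e} = insert {a,b} {e\<in>E-{{a,b}}. y\<in>e}" using True assms by auto
  have fin': "finite {e\<in>E-{{a,b}}. y\<in>e}" using fin by simp
  have nin: "{a,b} \<notin> {e\<in>E-{{a,b}}. y\<in>e}" by simp
  show ?thesis unfolding wt_def degree_def S sum.insert[OF fin' nin] card_insert_disjoint[OF fin' nin]
    using True by simp
next
  case False
  have "{e\<in>E. y\<in>e} = {e\<in>E-{{a,b}}. y\<in>e}" using False assms by auto
  then show ?thesis unfolding wt_def degree_def using False by simp
qed

lemma sum_if_add:
  assumes "finite A" "b \<in> A"
  shows "(\<Sum>y\<in>A. g y * (h y + (if y = b then c else 0))) = (\<Sum>y\<in>A. g y * h y) + g b * (c::real)"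
proof -
  have "(\<Sum>y\<in>A. g y * (h y + (if y = b then c else 0))) = (\<Sum>y\<in>A. g y * h y) + (\<Sum>y\<in>A. if y = b then g b * c else 0)"
    unfolding sum.distrib[symmetric] by (rule sum.cong) (auto simp: distrib_left)
  also have "(\<Sum>y\<in>A. if y = b then g b * c else 0) = g b * c" using assms by simp
  finally show ?thesis .
qed

lemma exp_split: "exp (- (L + t)) = exp (- L) * exp (- (t::real))"
  by (simp add: exp_add[symmetric])

lemma exp_split2: "exp (- L - t) = exp (- L) * exp (- (t::real))"
  by (simp add: exp_add[symmetric])

lemma weighting_tree:
  assumes "weighted_tree X E l"
  shows "\<forall>x\<in>X. (\<Sum>y\<in>X. exp (- tree_dist E l x y) * wt E l y) = 1"
proof (rule tree_induct[OF assms, where P="\<lambda>X E. \<forall>x\<in>X. (\<Sum>y\<in>X. exp (- tree_dist E l x y) * wt E l y) = 1"], goal_cases)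
  case (1 x)
  show ?case by (simp add: wt_def degree_def tree_dist_self)
next
  case (2 X E a b)
  note t = 2(1) and aX = 2(2) and bX = 2(3) and ab = 2(4) and abE = 2(5) and leaf = 2(6) and t' = 2(7)
  define E' where "E' = E - {{a,b}}"
  define L where "L = l {a,b}"
  define q where "q = exp (- L)"
  define c where "c = 1 / (1 + q) - 1"
  have qpos: "q > 0" unfolding q_def by simp
  then have q1: "1 + q \<noteq> 0" by simp
  have q2: "1 + (q * q + q * 2) \<noteq> 0" using qpos by (smt (verit) mult_pos_pos)
  have IH: "\<forall>x\<in>X-{a}. (\<Sum>y\<in>X-{a}. exp (- tree_dist E' l x y) * wt E' l y) = 1"
    using 2(8) unfolding E'_def .
  have finX: "finite X" using t unfolding weighted_tree_def by blast
  have finE: "finite E" using tree_finE[OF t] .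
  have finX': "finite (X - {a})" using finX by simp
  have bX': "b \<in> X - {a}" using bX ab by simp
  have wa: "wt E l a = 1 / (1 + q)" using wt_a[OF leaf] unfolding q_def L_def .
  have wo: "wt E l y = wt E' l y + (if y = b then c else 0)" if "y \<in> X - {a}" for y
    using wt_other[OF finE ab abE, of y l] that unfolding E'_def c_def q_def L_def by simp
  note D = dist_leaf[OF t aX ab abE leaf t' bX, folded E'_def L_def]
  have split: "(\<Sum>y\<in>X. f y) = f a + (\<Sum>y\<in>X-{a}. f y)" for f :: "'a \<Rightarrow> real"
    using sum.remove[OF finX aX] .
  show ?case
  proof
    fix x assume xX: "x \<in> X"
    show "(\<Sum>y\<in>X. exp (- tree_dist E l x y) * wt E l y) = 1"
    proof (cases "x = a")
      case True
      have "(\<Sum>y\<in>X-{a}. exp (- tree_dist E l a y) * wt E l y)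
          = (\<Sum>y\<in>X-{a}. q * (exp (- tree_dist E' l b y) * (wt E' l y + (if y = b then c else 0))))"
        by (rule sum.cong) (simp_all add: D(2) wo q_def exp_split exp_split2)
      also have "\<dots> = q * ((\<Sum>y\<in>X-{a}. exp (- tree_dist E' l b y) * wt E' l y) + exp (- tree_dist E' l b b) * c)"
        by (simp add: sum_distrib_left[symmetric] sum_if_add[OF finX' bX'])
      also have "\<dots> = q * (1 + c)" using IH bX' by (simp add: tree_dist_self)
      finally have S: "(\<Sum>y\<in>X-{a}. exp (- tree_dist E l a y) * wt E l y) = q * (1 + c)" .
      have "(\<Sum>y\<in>X. exp (- tree_dist E l a y) * wt E l y) = 1 / (1 + q) + q * (1 + c)"
        using split[of "\<lambda>y. exp (- tree_dist E l a y) * wt E l y"] S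
        by (simp add: tree_dist_self wa)
      then have "(\<Sum>y\<in>X. exp (- tree_dist E l x y) * wt E l y) = 1 / (1 + q) + q * (1 + c)"
        using True by simp
      also have "\<dots> = 1" unfolding c_def using q1 q2 by (simp add: field_simps)
      finally show ?thesis .
    next
      case False
      then have xX': "x \<in> X - {a}" using xX by simp
      define e where "e = exp (- tree_dist E' l x b)"
      have "(\<Sum>y\<in>X-{a}. exp (- tree_dist E l x y) * wt E l y)
          = (\<Sum>y\<in>X-{a}. exp (- tree_dist E' l x y) * (wt E' l y + (if y = b then c else 0)))"
        by (rule sum.cong) (simp_all add: D(1)[OF xX'] wo)
      also have "\<dots> = 1 + e * c" unfolding sum_if_add[OF finX' bX'] using IH xX' e_def by simp
      finally have S: "(\<Sum>y\<in>X-{a}. exp (- tree_dist E l x y) * wt E l y) = 1 + e * c" .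
      have sym: "tree_dist E' l b x = tree_dist E' l x b" using tree_dist_sym[OF t' bX' xX'] unfolding E'_def by simp
      have "exp (- tree_dist E l x a) * wt E l a = q * e / (1 + q)"
        using D(3)[OF xX'] sym unfolding wa e_def q_def by (simp add: exp_split exp_split2)
      then have "(\<Sum>y\<in>X. exp (- tree_dist E l x y) * wt E l y) = q * e / (1 + q) + (1 + e * c)"
        using split[of "\<lambda>y. exp (- tree_dist E l x y) * wt E l y"] S by simp
      also have "\<dots> = 1" unfolding c_def using q1 q2 by (simp add: field_simps)
      finally show ?thesis .
    qed
  qed
qed



lemma homog_tree:
  assumes "weighted_tree X E l"
  shows "\<forall>v. (\<forall>x\<in>X. (\<Sum>y\<in>X. exp (- tree_dist E l x y) * v y) = 0) \<longrightarrow> (\<forall>x\<in>X. v x = 0)"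
proof (rule tree_induct[OF assms, where P="\<lambda>X E. \<forall>v. (\<forall>x\<in>X. (\<Sum>y\<in>X. exp (- tree_dist E l x y) * v y) = 0) \<longrightarrow> (\<forall>x\<in>X. v x = 0)"], goal_cases)
  case (1 x)
  show ?case by (simp add: tree_dist_self)
next
  case (2 X E a b)
  note t = 2(1) and aX = 2(2) and bX = 2(3) and ab = 2(4) and abE = 2(5) and leaf = 2(6) and t' = 2(7)
  define E' where "E' = E - {{a,b}}"
  define L where "L = l {a,b}"
  define q where "q = exp (- L)"
  have Lpos: "L > 0" using t abE unfolding weighted_tree_def L_def by blast
  have qpos: "q > 0" unfolding q_def by simp
  have qlt: "q < 1" unfolding q_def using Lpos by simp
  have IH: "\<forall>v. (\<forall>x\<in>X-{a}. (\<Sum>y\<in>X-{a}. exp (- tree_dist E' l x y) * v y) = 0) \<longrightarrow> (\<forall>x\<in>X-{a}. v x = 0)"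
    using 2(8) unfolding E'_def .
  have finX: "finite X" using t unfolding weighted_tree_def by blast
  have bX': "b \<in> X - {a}" using bX ab by simp
  note D = dist_leaf[OF t aX ab abE leaf t' bX, folded E'_def L_def]
  have split: "(\<Sum>y\<in>X. f y) = f a + (\<Sum>y\<in>X-{a}. f y)" for f :: "'a \<Rightarrow> real"
    using sum.remove[OF finX aX] .
  show ?case
  proof (intro allI impI)
    fix v assume H: "\<forall>x\<in>X. (\<Sum>y\<in>X. exp (- tree_dist E l x y) * v y) = 0"
    define S where "S = (\<Sum>y\<in>X-{a}. exp (- tree_dist E' l b y) * v y)"
    have "(\<Sum>y\<in>X-{a}. exp (- tree_dist E l a y) * v y) = (\<Sum>y\<in>X-{a}. q * (exp (- tree_dist E' l b y) * v y))"
      by (rule sum.cong) (simp_all add: D(2) q_def exp_split exp_split2)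
    also have "\<dots> = q * S" unfolding S_def by (simp add: sum_distrib_left)
    finally have Sa: "(\<Sum>y\<in>X-{a}. exp (- tree_dist E l a y) * v y) = q * S" .
    have "0 = (\<Sum>y\<in>X. exp (- tree_dist E l a y) * v y)" using H aX by simp
    also have "\<dots> = v a + q * S" using split[of "\<lambda>y. exp (- tree_dist E l a y) * v y"] Sa
      by (simp add: tree_dist_self)
    finally have r1: "v a + q * S = 0" by simp
    have "(\<Sum>y\<in>X-{a}. exp (- tree_dist E l b y) * v y) = S"
      unfolding S_def by (rule sum.cong) (simp_all add: D(1)[OF bX'])
    moreover have "tree_dist E l b a = L" using D(3)[OF bX'] by (simp add: tree_dist_self)
    ultimately have "(\<Sum>y\<in>X. exp (- tree_dist E l b y) * v y) = q * v a + S"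
      using split[of "\<lambda>y. exp (- tree_dist E l b y) * v y"] unfolding q_def by simp
    then have r2: "q * v a + S = 0" using H bX by simp
    have S: "S = - q * v a" using r2 by linarith
    have "(1 - q * q) * v a = v a + q * S" unfolding S by (simp add: algebra_simps)
    then have "(1 - q * q) * v a = 0" using r1 by simp
    moreover have "1 - q * q \<noteq> 0" using qpos qlt by (smt (verit) mult_less_cancel_left1)
    ultimately have va: "v a = 0" by simp
    have "\<forall>x\<in>X-{a}. (\<Sum>y\<in>X-{a}. exp (- tree_dist E' l x y) * v y) = 0"
    proof
      fix x assume xX': "x \<in> X - {a}"
      have "0 = (\<Sum>y\<in>X. exp (- tree_dist E l x y) * v y)" using H xX' by simp
      also have "\<dots> = (\<Sum>y\<in>X-{a}. exp (- tree_dist E l x y) * v y)"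
        using split[of "\<lambda>y. exp (- tree_dist E l x y) * v y"] va by simp
      also have "\<dots> = (\<Sum>y\<in>X-{a}. exp (- tree_dist E' l x y) * v y)"
        by (rule sum.cong) (simp_all add: D(1)[OF xX'])
      finally show "(\<Sum>y\<in>X-{a}. exp (- tree_dist E' l x y) * v y) = 0" by simp
    qed
    then have "\<forall>x\<in>X-{a}. v x = 0" using IH by blast
    then show "\<forall>x\<in>X. v x = 0" using va by blast
  qed
qed

lemma magnitude_tree:
  assumes "weighted_tree X E l"
  shows "(\<Sum>x\<in>X. wt E l x) = 1 + (\<Sum>e\<in>E. tanh (l e / 2))"
proof (rule tree_induct[OF assms, where P="\<lambda>X E. (\<Sum>x\<in>X. wt E l x) = 1 + (\<Sum>e\<in>E. tanh (l e / 2))"], goal_cases)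
  case (1 x)
  show ?case by (simp add: wt_def degree_def)
next
  case (2 X E a b)
  note t = 2(1) and aX = 2(2) and bX = 2(3) and ab = 2(4) and abE = 2(5) and leaf = 2(6) and t' = 2(7)
  define E' where "E' = E - {{a,b}}"
  define L where "L = l {a,b}"
  define q where "q = exp (- L)"
  define c where "c = 1 / (1 + q) - 1"
  have qpos: "q > 0" unfolding q_def by simp
  then have q1: "1 + q \<noteq> 0" by simp
  have IH: "(\<Sum>x\<in>X-{a}. wt E' l x) = 1 + (\<Sum>e\<in>E'. tanh (l e / 2))"
    using 2(8) unfolding E'_def .
  have finX: "finite X" using t unfolding weighted_tree_def by blast
  have finE: "finite E" using tree_finE[OF t] .
  have finX': "finite (X - {a})" using finX by simp
  have bX': "b \<in> X - {a}" using bX ab by simp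
  have wa: "wt E l a = 1 / (1 + q)" using wt_a[OF leaf] unfolding q_def L_def .
  have wo: "wt E l y = 1 * (wt E' l y + (if y = b then c else 0))" if "y \<in> X - {a}" for y
    using wt_other[OF finE ab abE, of y l] that unfolding E'_def c_def q_def L_def by simp
  have "(\<Sum>x\<in>X. wt E l x) = wt E l a + (\<Sum>x\<in>X-{a}. wt E l x)" using sum.remove[OF finX aX] .
  also have "(\<Sum>x\<in>X-{a}. wt E l x) = (\<Sum>x\<in>X-{a}. 1 * (wt E' l x + (if x = b then c else 0)))"
    by (rule sum.cong) (simp_all add: wo)
  also have "\<dots> = (\<Sum>x\<in>X-{a}. 1 * wt E' l x) + 1 * c" by (rule sum_if_add[OF finX' bX'])
  finally have s1: "(\<Sum>x\<in>X. wt E l x) = 1 / (1 + q) + (1 + (\<Sum>e\<in>E'. tanh (l e / 2))) + c"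
    using IH wa by simp
  have s2: "(\<Sum>e\<in>E. tanh (l e / 2)) = tanh (L / 2) + (\<Sum>e\<in>E'. tanh (l e / 2))"
    unfolding E'_def L_def using sum.remove[OF finE abE] .
  have th: "tanh (L / 2) = (1 - q) / (1 + q)" unfolding tanh_real_altdef q_def by simp
  have k: "1 / (1 + q) + c = (1 - q) / (1 + q)" unfolding c_def using q1 by (simp add: field_simps)
  show ?case unfolding s1 s2 th using k by linarith
qed

lemma negtype_tree:
  assumes "weighted_tree X E l"
  shows "\<exists>\<phi> :: 'a \<Rightarrow> 'a \<Rightarrow> real. \<forall>x\<in>X. \<forall>y\<in>X. tree_dist E l x y = (\<Sum>z\<in>X. (\<phi> x z - \<phi> y z)\<^sup>2)"
proof (rule tree_induct[OF assms, where P="\<lambda>X E. \<exists>\<phi> :: 'a \<Rightarrow> 'a \<Rightarrow> real. \<forall>x\<in>X. \<forall>y\<in>X. tree_dist E l x y = (\<Sum>z\<in>X. (\<phi> x z - \<phi> y z)\<^sup>2)"], goal_cases)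
  case (1 x)
  show ?case by (simp add: tree_dist_self)
next
  case (2 X E a b)
  note t = 2(1) and aX = 2(2) and bX = 2(3) and ab = 2(4) and abE = 2(5) and leaf = 2(6) and t' = 2(7)
  define E' where "E' = E - {{a,b}}"
  define L where "L = l {a,b}"
  have Lpos: "L > 0" using t abE unfolding weighted_tree_def L_def by blast
  obtain \<phi>' :: "'a \<Rightarrow> 'a \<Rightarrow> real" where IH: "\<forall>x\<in>X-{a}. \<forall>y\<in>X-{a}. tree_dist E' l x y = (\<Sum>z\<in>X-{a}. (\<phi>' x z - \<phi>' y z)\<^sup>2)"
    using 2(8) unfolding E'_def by blast
  have finX: "finite X" using t unfolding weighted_tree_def by blast
  have bX': "b \<in> X - {a}" using bX ab by simp
  note D = dist_leaf[OF t aX ab abE leaf t' bX, folded E'_def L_def]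
  define r where "r x = (if x = a then b else x)" for x
  define \<phi> where "\<phi> x z = (if z = a then (if x = a then sqrt L else 0) else \<phi>' (r x) z)" for x z
  have rX: "r x \<in> X - {a}" if "x \<in> X" for x using that bX' unfolding r_def by auto
  have key: "(\<Sum>z\<in>X. (\<phi> x z - \<phi> y z)\<^sup>2) = (\<phi> x a - \<phi> y a)\<^sup>2 + tree_dist E' l (r x) (r y)"
    if "x \<in> X" "y \<in> X" for x y
  proof -
    have "(\<Sum>z\<in>X. (\<phi> x z - \<phi> y z)\<^sup>2) = (\<phi> x a - \<phi> y a)\<^sup>2 + (\<Sum>z\<in>X-{a}. (\<phi> x z - \<phi> y z)\<^sup>2)"
      using sum.remove[OF finX aX] .
    also have "(\<Sum>z\<in>X-{a}. (\<phi> x z - \<phi> y z)\<^sup>2) = (\<Sum>z\<in>X-{a}. (\<phi>' (r x) z - \<phi>' (r y) z)\<^sup>2)"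
      by (rule sum.cong) (simp_all add: \<phi>_def)
    also have "\<dots> = tree_dist E' l (r x) (r y)" using IH rX that by simp
    finally show ?thesis .
  qed
  have "\<forall>x\<in>X. \<forall>y\<in>X. tree_dist E l x y = (\<Sum>z\<in>X. (\<phi> x z - \<phi> y z)\<^sup>2)"
  proof (intro ballI)
    fix x y assume x: "x \<in> X" and y: "y \<in> X"
    have sL: "(sqrt L)\<^sup>2 = L" using Lpos by simp
    show "tree_dist E l x y = (\<Sum>z\<in>X. (\<phi> x z - \<phi> y z)\<^sup>2)"
    proof (cases "x = a")
      case True
      show ?thesis
      proof (cases "y = a")
        case True
        then show ?thesis using key[OF x y] \<open>x = a\<close> by (simp add: tree_dist_self r_def)
      next
        case False
        then have y': "y \<in> X - {a}" using y by simp
        show ?thesis using key[OF x y] \<open>x = a\<close> False D(2)[OF y'] sL by (simp add: r_def \<phi>_def)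
      qed
    next
      case xa: False
      then have x': "x \<in> X - {a}" using x by simp
      show ?thesis
      proof (cases "y = a")
        case True
        have "tree_dist E' l b x = tree_dist E' l x b" using tree_dist_sym[OF t' bX' x'] unfolding E'_def by simp
        then show ?thesis using key[OF x y] True xa D(3)[OF x'] sL by (simp add: r_def \<phi>_def)
      next
        case False
        then have y': "y \<in> X - {a}" using y by simp
        show ?thesis using key[OF x y] False xa D(1)[OF x' y'] by (simp add: r_def \<phi>_def)
      qed
    qed
  qed
  then show ?case by blast
qed

theorem proposition3p2:
  fixes X :: "'a set" and E :: "'a set set" and l :: "'a set \<Rightarrow> real"
  assumes "weighted_tree X E l"
  defines "d \<equiv> tree_dist E l"
  defines "w \<equiv> (\<lambda>x. (\<Sum>e\<in>{e \<in> E. x \<in> e}. 1 / (1 + exp (- l e))) - (real (degree E x) - 1))"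
  shows "negative_type X d
    \<and> is_weighting X d w
    \<and> (\<forall>v. is_weighting X d v \<longrightarrow> (\<forall>x\<in>X. v x = w x))
    \<and> (\<Sum>x\<in>X. w x) = 1 + (\<Sum>e\<in>E. tanh (l e / 2))"
proof -
  have w_eq: "w = wt E l" unfolding w_def by (rule ext) (simp add: wt_def)
  obtain \<phi> :: "'a \<Rightarrow> 'a \<Rightarrow> real" where phi: "\<forall>x\<in>X. \<forall>y\<in>X. d x y = (\<Sum>z\<in>X. (\<phi> x z - \<phi> y z)\<^sup>2)"
    using negtype_tree[OF assms(1)] unfolding d_def by blast
  have nt: "negative_type X d" unfolding negative_type_def using phi by auto
  have W: "is_weighting X d w" unfolding is_weighting_def w_eq d_def using weighting_tree[OF assms(1)] .
  have U: "\<forall>x\<in>X. v x = w x" if v: "is_weighting X d v" for v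
  proof -
    have "\<forall>x\<in>X. (\<Sum>y\<in>X. exp (- tree_dist E l x y) * (v y - w y)) = 0"
    proof
      fix x assume x: "x \<in> X"
      have "(\<Sum>y\<in>X. exp (- tree_dist E l x y) * (v y - w y))
          = (\<Sum>y\<in>X. exp (- d x y) * v y) - (\<Sum>y\<in>X. exp (- d x y) * w y)"
        unfolding d_def by (simp add: right_diff_distrib sum_subtractf)
      also have "\<dots> = 0" using v W x unfolding is_weighting_def by simp
      finally show "(\<Sum>y\<in>X. exp (- tree_dist E l x y) * (v y - w y)) = 0" .
    qed
    then have "\<forall>x\<in>X. v x - w x = 0" using spec[OF homog_tree[OF assms(1)], of "\<lambda>y. v y - w y"] by simp
    then show ?thesis by simp
  qed
  have M: "(\<Sum>x\<in>X. w x) = 1 + (\<Sum>e\<in>E. tanh (l e / 2))" unfolding w_eq by (rule magnitude_tree[OF assms(1)])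
  show ?thesis using nt W U M by blast
qed

end
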